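(* For each $n<\omega$ let $G_n$ be a non-trivial finite group, and suppose there is a fixed group $\Gamma$ such that $G_n=\Gamma$ for infinitely many $n<\omega$. Then the compact group $G=\prod_{n<\omega}G_n$ (product topology, each factor discrete, normalized Haar measure) has a subgroup that is not Haar measurable. *)

theory Defs
  imports "HOL-Probability.Probability" "HOL-Algebra.Product_Groups"
begin

text \<open>Normalized Haar measure on the compact group \<open>\<Prod>n. G n\<close> (each factor discrete and
finite): the infinite product of the normalized counting (uniform) measures on the factors.
"Haar measurable" means measurable for the completion of this measure.\<close>

definition haar_prod :: "(nat \<Rightarrow> ('a, 'b) monoid_scheme) \<Rightarrow> (nat \<Rightarrow> 'a) measure" where
  "haar_prod G = (\<Pi>\<^sub>M n\<in>UNIV. uniform_count_measure (carrier (G n)))"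

definition haar_measurable :: "(nat \<Rightarrow> ('a, 'b) monoid_scheme) \<Rightarrow> (nat \<Rightarrow> 'a) set \<Rightarrow> bool" where
  "haar_measurable G S \<longleftrightarrow> S \<in> sets (completion (haar_prod G))"

end

theory Submission
  imports Defs
begin


lemma exists_ultra:
  fixes I :: "nat set"
  assumes inf: "infinite I"
  shows "\<exists>U. I \<in> U \<and> (\<forall>A\<in>U. \<forall>B\<in>U. A \<inter> B \<in> U) \<and> (\<forall>A\<in>U. \<forall>B. A \<subseteq> B \<longrightarrow> B \<in> U)
     \<and> (\<forall>A\<in>U. infinite A) \<and> (\<forall>A. A \<in> U \<or> - A \<in> U)"
proof -
  define V0 where "V0 = {B. \<exists>m. {n\<in>I. m \<le> n} \<subseteq> B}"
  define \<A> where "\<A> = {V. V0 \<subseteq> V \<and> (\<forall>A\<in>V. \<forall>B\<in>V. A \<inter> B \<in> V) \<and> (\<forall>A\<in>V. \<forall>B. A \<subseteq> B \<longrightarrow> B \<in> V)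
     \<and> (\<forall>A\<in>V. infinite A)}"
  have infm: "infinite {n\<in>I. m \<le> n}" for m
  proof
    assume "finite {n\<in>I. m \<le> n}"
    moreover have "I \<subseteq> {n\<in>I. m \<le> n} \<union> {..<m}" by auto
    ultimately show False using inf by (meson finite_Un finite_lessThan finite_subset)
  qed
  have V0A: "V0 \<in> \<A>"
    unfolding \<A>_def
  proof (intro CollectI conjI ballI allI impI)
    fix A B assume "A \<in> V0" "B \<in> V0"
    then obtain m1 m2 where "{n\<in>I. m1 \<le> n} \<subseteq> A" "{n\<in>I. m2 \<le> n} \<subseteq> B" unfolding V0_def by auto
    then have "{n\<in>I. max m1 m2 \<le> n} \<subseteq> A \<inter> B" by auto
    then show "A \<inter> B \<in> V0" unfolding V0_def by blast
  next
    fix A B assume "A \<in> V0" "A \<subseteq> B" then show "B \<in> V0" unfolding V0_def by blast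
  next
    fix A assume "A \<in> V0"
    then obtain m where "{n\<in>I. m \<le> n} \<subseteq> A" unfolding V0_def by auto
    then show "infinite A" using infm finite_subset by blast
  qed simp
  have "\<exists>M\<in>\<A>. \<forall>X\<in>\<A>. M \<subseteq> X \<longrightarrow> X = M"
  proof (rule Zorn_Lemma2, intro ballI)
    fix C assume C: "C \<in> chains \<A>"
    show "\<exists>U\<in>\<A>. \<forall>X\<in>C. X \<subseteq> U"
    proof (cases "C = {}")
      case True then show ?thesis using V0A by blast
    next
      case False
      have sub: "C \<subseteq> \<A>" using C chainsD2 by blast
      have "\<Union>C \<in> \<A>"
        unfolding \<A>_def
      proof (intro CollectI conjI ballI allI impI)
        obtain X where "X \<in> C" using False by blast
        then show "V0 \<subseteq> \<Union>C" using sub unfolding \<A>_def by blast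
      next
        fix A B assume "A \<in> \<Union>C" "B \<in> \<Union>C"
        then obtain X Y where XY: "X \<in> C" "Y \<in> C" "A \<in> X" "B \<in> Y" by auto
        from chainsD[OF C XY(1,2)] show "A \<inter> B \<in> \<Union>C"
        proof
          assume "X \<subseteq> Y" then have "A \<inter> B \<in> Y" using XY sub unfolding \<A>_def by blast
          then show ?thesis using XY by blast
        next
          assume "Y \<subseteq> X" then have "A \<inter> B \<in> X" using XY sub unfolding \<A>_def by blast
          then show ?thesis using XY by blast
        qed
      next
        fix A B assume "A \<in> \<Union>C" "A \<subseteq> B" then show "B \<in> \<Union>C" using sub unfolding \<A>_def by blast
      next
        fix A assume "A \<in> \<Union>C" then show "infinite A" using sub unfolding \<A>_def by blast
      qed
      then show ?thesis by blast
    qed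
  qed
  then obtain U where UA: "U \<in> \<A>" and max: "\<And>X. X \<in> \<A> \<Longrightarrow> U \<subseteq> X \<Longrightarrow> X = U" by blast
  have U0: "V0 \<subseteq> U" and Uint: "\<forall>A\<in>U. \<forall>B\<in>U. A \<inter> B \<in> U" and Uup: "\<forall>A\<in>U. \<forall>B. A \<subseteq> B \<longrightarrow> B \<in> U"
    and Uinf: "\<forall>A\<in>U. infinite A" using UA unfolding \<A>_def by auto
  have UNIVU: "UNIV \<in> U" using U0 unfolding V0_def by auto
  have ext: "A \<in> U" if "\<forall>X\<in>U. infinite (A \<inter> X)" for A
  proof -
    define U' where "U' = {B. \<exists>X\<in>U. A \<inter> X \<subseteq> B}"
    have "U' \<in> \<A>"
      unfolding \<A>_def
    proof (intro CollectI conjI ballI allI impI)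
      show "V0 \<subseteq> U'" using U0 unfolding U'_def by blast
    next
      fix B1 B2 assume "B1 \<in> U'" "B2 \<in> U'"
      then obtain X1 X2 where "X1 \<in> U" "X2 \<in> U" "A \<inter> X1 \<subseteq> B1" "A \<inter> X2 \<subseteq> B2" unfolding U'_def by auto
      then show "B1 \<inter> B2 \<in> U'" unfolding U'_def using Uint by (intro CollectI bexI[of _ "X1 \<inter> X2"]) auto
    next
      fix B1 B2 assume "B1 \<in> U'" "B1 \<subseteq> B2" then show "B2 \<in> U'" unfolding U'_def by blast
    next
      fix B assume "B \<in> U'"
      then obtain X where "X \<in> U" "A \<inter> X \<subseteq> B" unfolding U'_def by auto
      then show "infinite B" using that finite_subset by blast
    qed
    moreover have "U \<subseteq> U'" unfolding U'_def by blast
    ultimately have "U' = U" using max by blast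
    moreover have "A \<in> U'" unfolding U'_def using UNIVU by blast
    ultimately show ?thesis by simp
  qed
  have ultra: "A \<in> U \<or> - A \<in> U" for A
  proof (rule ccontr)
    assume "\<not> (A \<in> U \<or> - A \<in> U)"
    then obtain X Y where "X \<in> U" "finite (A \<inter> X)" "Y \<in> U" "finite (- A \<inter> Y)"
      using ext[of A] ext[of "- A"] by blast
    moreover have sub: "X \<inter> Y \<subseteq> (A \<inter> X) \<union> (- A \<inter> Y)" by auto
    ultimately have "finite (X \<inter> Y)" "X \<inter> Y \<in> U"
      using Uint by (auto intro: finite_subset[OF sub])
    then show False using Uinf by blast
  qed
  have "I \<in> U" using U0 unfolding V0_def by auto
  then show ?thesis using Uint Uup Uinf ultra by blast
qed



definition tr :: "(nat \<Rightarrow> ('a,'b) monoid_scheme) \<Rightarrow> (nat \<Rightarrow> 'a) \<Rightarrow> (nat \<Rightarrow> 'a) \<Rightarrow> (nat \<Rightarrow> 'a)" where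
  "tr G c x = (\<lambda>n. monoid.mult (G n) (c n) (x n))"

lemma card_lmult_pre:
  assumes "group Gr" "c \<in> carrier Gr" "X \<subseteq> carrier Gr"
  shows "card {a\<in>carrier Gr. c \<otimes>\<^bsub>Gr\<^esub> a \<in> X} = card X"
proof -
  interpret group Gr by fact
  have "{a\<in>carrier Gr. c \<otimes>\<^bsub>Gr\<^esub> a \<in> X} = (\<lambda>b. inv\<^bsub>Gr\<^esub> c \<otimes>\<^bsub>Gr\<^esub> b) ` X"
  proof (safe)
    fix a assume a: "a \<in> carrier Gr" "c \<otimes>\<^bsub>Gr\<^esub> a \<in> X"
    then have "a = inv\<^bsub>Gr\<^esub> c \<otimes>\<^bsub>Gr\<^esub> (c \<otimes>\<^bsub>Gr\<^esub> a)" using assms by (simp add: m_assoc[symmetric])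
    then show "a \<in> (\<lambda>b. inv\<^bsub>Gr\<^esub> c \<otimes>\<^bsub>Gr\<^esub> b) ` X" using a by blast
  next
    fix b assume "b \<in> X" then show "inv\<^bsub>Gr\<^esub> c \<otimes>\<^bsub>Gr\<^esub> b \<in> carrier Gr" using assms by auto
  next
    fix b assume "b \<in> X" then show "c \<otimes>\<^bsub>Gr\<^esub> (inv\<^bsub>Gr\<^esub> c \<otimes>\<^bsub>Gr\<^esub> b) \<in> X" using assms
      by (metis (no_types, lifting) inv_closed m_assoc r_inv l_one subsetD)
  qed
  moreover have "inj_on (\<lambda>b. inv\<^bsub>Gr\<^esub> c \<otimes>\<^bsub>Gr\<^esub> b) X"
    using assms by (intro inj_onI) (metis inv_closed Units_l_cancel Units_eq subsetD)
  ultimately show ?thesis by (simp add: card_image)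
qed

context
  fixes G :: "nat \<Rightarrow> ('a,'b) monoid_scheme"
  assumes grp: "\<And>n. group (G n)" and fin: "\<And>n. finite (carrier (G n))"
begin

lemma space_haar: "space (haar_prod G) = (\<Pi>\<^sub>E n\<in>UNIV. carrier (G n))"
  by (simp add: haar_prod_def space_PiM space_uniform_count_measure)

lemma carr_ne: "carrier (G n) \<noteq> {}"
  using group.is_monoid[OF grp] monoid.one_closed by blast

lemma prob_factor: "prob_space (uniform_count_measure (carrier (G n)))"
  by (rule prob_space_uniform_count_measure[OF fin carr_ne])

lemma prob_haar: "prob_space (haar_prod G)"
  unfolding haar_prod_def by (rule prob_space_PiM) (rule prob_factor)

lemma tr_space: "c \<in> space (haar_prod G) \<Longrightarrow> x \<in> space (haar_prod G) \<Longrightarrow> tr G c x \<in> space (haar_prod G)"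
  unfolding space_haar tr_def using monoid.m_closed[OF group.is_monoid[OF grp]] by (auto simp: PiE_iff)

lemma tr_meas: assumes c: "c \<in> space (haar_prod G)" shows "tr G c \<in> measurable (haar_prod G) (haar_prod G)"
proof -
  have "(\<lambda>x n. (\<lambda>n x. c n \<otimes>\<^bsub>G n\<^esub> x n) n x) \<in> measurable (haar_prod G) (\<Pi>\<^sub>M n\<in>UNIV. uniform_count_measure (carrier (G n)))"
  proof (rule measurable_PiM_single')
    fix n :: nat
    show "(\<lambda>x. c n \<otimes>\<^bsub>G n\<^esub> x n) \<in> measurable (haar_prod G) (uniform_count_measure (carrier (G n)))"
      unfolding measurable_def
    proof (safe)
      fix x assume "x \<in> space (haar_prod G)"
      then show "c n \<otimes>\<^bsub>G n\<^esub> x n \<in> space (uniform_count_measure (carrier (G n)))"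
        using tr_space[OF c, of x] by (auto simp: space_uniform_count_measure space_haar tr_def)
    next
      fix A assume "A \<in> sets (uniform_count_measure (carrier (G n)))"
      have "(\<lambda>x. c n \<otimes>\<^bsub>G n\<^esub> x n) -` A \<inter> space (haar_prod G) =
         {x\<in>space (\<Pi>\<^sub>M n\<in>UNIV. uniform_count_measure (carrier (G n))). (\<lambda>a. c n \<otimes>\<^bsub>G n\<^esub> a \<in> A) (x n)}"
        by (auto simp: haar_prod_def)
      also have "\<dots> \<in> sets (\<Pi>\<^sub>M n\<in>UNIV. uniform_count_measure (carrier (G n)))"
        by (rule sets_Collect_single') (auto simp: sets_uniform_count_measure space_uniform_count_measure)
      finally show "(\<lambda>x. c n \<otimes>\<^bsub>G n\<^esub> x n) -` A \<inter> space (haar_prod G) \<in> sets (haar_prod G)"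
        by (simp add: haar_prod_def)
    qed
  next
    show "(\<lambda>x n. c n \<otimes>\<^bsub>G n\<^esub> x n) \<in> space (haar_prod G) \<rightarrow> (\<Pi>\<^sub>E n\<in>UNIV. space (uniform_count_measure (carrier (G n))))"
      using tr_space[OF c] by (auto simp: space_uniform_count_measure space_haar tr_def)
  qed
  moreover have "tr G c = (\<lambda>x n. c n \<otimes>\<^bsub>G n\<^esub> x n)" by (simp add: fun_eq_iff tr_def)
  ultimately show ?thesis by (simp add: haar_prod_def)
qed

lemma tr_distr: assumes c: "c \<in> space (haar_prod G)" shows "distr (haar_prod G) (haar_prod G) (tr G c) = haar_prod G"
proof -
  define F where "F = (\<lambda>n. uniform_count_measure (carrier (G n)))"
  interpret product_prob_space F UNIV
    unfolding F_def product_prob_space_def product_prob_space_axioms_def product_sigma_finite_def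
    using prob_factor by (auto intro: prob_space_imp_sigma_finite)
  have M: "haar_prod G = PiM UNIV F" by (simp add: haar_prod_def F_def)
  show ?thesis unfolding M
  proof (rule PiM_eq)
    fix J :: "nat set" and X assume J: "finite J" and X: "\<And>j. j \<in> J \<Longrightarrow> X j \<in> sets (F j)"
    define X' where "X' j = {a\<in>carrier (G j). c j \<otimes>\<^bsub>G j\<^esub> a \<in> X j}" for j
    have "tr G c -` prod_emb UNIV F J (Pi\<^sub>E J X) \<inter> space (PiM UNIV F) = prod_emb UNIV F J (Pi\<^sub>E J X')"
      using tr_space[OF c] c
      by (auto simp: prod_emb_iff X'_def F_def space_PiM space_uniform_count_measure tr_def M[symmetric] space_haar PiE_iff extensional_def)
    then have "emeasure (distr (PiM UNIV F) (PiM UNIV F) (tr G c)) (prod_emb UNIV F J (Pi\<^sub>E J X)) =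
      emeasure (PiM UNIV F) (prod_emb UNIV F J (Pi\<^sub>E J X'))"
      using tr_meas[OF c] X J by (subst emeasure_distr) (auto simp: M intro!: sets_PiM_I)
    also have "\<dots> = (\<Prod>j\<in>J. emeasure (F j) (X' j))"
      using J by (intro emeasure_PiM_emb) (auto simp: X'_def F_def sets_uniform_count_measure)
    also have "\<dots> = (\<Prod>j\<in>J. emeasure (F j) (X j))"
    proof (rule prod.cong[OF refl])
      fix j assume "j \<in> J"
      then have Xs: "X j \<subseteq> carrier (G j)" using X by (auto simp: F_def sets_uniform_count_measure)
      have "c j \<in> carrier (G j)" using c by (auto simp: space_haar)
      then have "card (X' j) = card (X j)" unfolding X'_def using card_lmult_pre[OF grp _ Xs] by blast
      then show "emeasure (F j) (X' j) = emeasure (F j) (X j)"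
        using Xs fin by (simp add: F_def emeasure_uniform_count_measure X'_def)
    qed
    finally show "emeasure (distr (PiM UNIV F) (PiM UNIV F) (tr G c)) (prod_emb UNIV F J (Pi\<^sub>E J X)) = (\<Prod>j\<in>J. emeasure (F j) (X j))" .
  qed simp
qed

end


lemma dens_ind: "A \<in> sets M \<Longrightarrow> X \<in> sets M \<Longrightarrow> emeasure (density M (indicator A)) X = emeasure M (A \<inter> X)"
  by (simp add: emeasure_density indicator_inter_arith[symmetric])

theorem mainTheorem6:
  fixes G :: "nat \<Rightarrow> ('a, 'b) monoid_scheme" and \<Gamma> :: "('a, 'b) monoid_scheme"
  assumes "\<And>n. group (G n)"
    and "\<And>n. finite (carrier (G n))"
    and "\<And>n. carrier (G n) \<noteq> {\<one>\<^bsub>G n\<^esub>}"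
    and "infinite {n. G n = \<Gamma>}"
  shows "\<exists>H. subgroup H (product_group UNIV G) \<and> \<not> haar_measurable G H"
proof -
  define I where "I = {n. G n = \<Gamma>}"
  have infI: "infinite I" using assms(4) by (simp add: I_def)
  obtain U where Uall: "I \<in> U \<and> (\<forall>A\<in>U. \<forall>B\<in>U. A \<inter> B \<in> U) \<and> (\<forall>A\<in>U. \<forall>B. A \<subseteq> B \<longrightarrow> B \<in> U)
     \<and> (\<forall>A\<in>U. infinite A) \<and> (\<forall>A. A \<in> U \<or> - A \<in> U)"
    using exists_ultra[OF infI] by (elim exE) (rule that)
  have UI: "I \<in> U" using Uall by blast
  have Uint: "\<And>A B. A\<in>U \<Longrightarrow> B\<in>U \<Longrightarrow> A \<inter> B \<in> U" using Uall by blast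
  have Uup: "\<And>A B. A\<in>U \<Longrightarrow> A \<subseteq> B \<Longrightarrow> B \<in> U" using Uall by blast
  have Uinf: "\<And>A. A\<in>U \<Longrightarrow> infinite A" using Uall by blast
  have Uult: "\<And>A. A \<in> U \<or> - A \<in> U" using Uall by blast
  have Uiff: "A \<in> U \<longleftrightarrow> B \<in> U" if "finite J" "A - J = B - J" for A B J
  proof -
    have "- J \<in> U" using Uult[of J] Uinf that(1) by blast
    have "X - J \<in> U" if "X \<in> U" for X using Uint[OF that \<open>- J \<in> U\<close>] by (simp add: Diff_eq)
    then show ?thesis using that(2) Uup by (metis Diff_subset)
  qed
  have Udisj: "A \<inter> B = {} \<Longrightarrow> A \<in> U \<Longrightarrow> B \<in> U \<Longrightarrow> False" for A B
  proof -
    assume "A \<inter> B = {}" "A \<in> U" "B \<in> U"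
    then have "{} \<in> U" using Uint[of A B] by simp
    then show False using Uinf[of "{}"] by simp
  qed
  have Uunion: "finite K \<Longrightarrow> \<Union>K \<in> U \<Longrightarrow> \<exists>A\<in>K. A \<in> U" for K
  proof (induction K rule: finite_induct)
    case empty then show ?case using Uinf by auto
  next
    case (insert A K)
    show ?case
    proof (cases "A \<in> U")
      case False
      then have "- A \<in> U" using Uult by blast
      then have "\<Union>K \<in> U" using Uint[OF insert(4) \<open>- A \<in> U\<close>] Uup by blast
      then show ?thesis using insert(3) by blast
    qed blast
  qed
  obtain n0 where n0: "n0 \<in> I" using infI by (metis finite.emptyI ex_in_conv)
  have GI: "n \<in> I \<Longrightarrow> G n = \<Gamma>" for n by (simp add: I_def)
  have grpG: "group \<Gamma>" using assms(1)[of n0] GI[OF n0] by simp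
  have finG: "finite (carrier \<Gamma>)" using assms(2)[of n0] GI[OF n0] by simp
  obtain \<delta>0 where d0: "\<delta>0 \<in> carrier \<Gamma>" "\<delta>0 \<noteq> \<one>\<^bsub>\<Gamma>\<^esub>"
  proof -
    have "\<one>\<^bsub>\<Gamma>\<^esub> \<in> carrier \<Gamma>" using monoid.one_closed[OF group.is_monoid[OF grpG]] .
    moreover have "carrier \<Gamma> \<noteq> {\<one>\<^bsub>\<Gamma>\<^esub>}" using assms(3)[of n0] GI[OF n0] by simp
    ultimately show ?thesis using that by blast
  qed
  define P where "P = product_group UNIV G"
  define Hs where "Hs \<delta> = {x \<in> carrier P. {n\<in>I. x n = \<delta>} \<in> U}" for \<delta>
  define H where "H = Hs \<one>\<^bsub>\<Gamma>\<^esub>"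
  have grpP: "group P" unfolding P_def using assms(1) by simp
  have sub: "subgroup H P"
  proof (rule group.subgroupI[OF grpP])
    show "H \<subseteq> carrier P" unfolding H_def Hs_def by auto
  next
    have "{n\<in>I. \<one>\<^bsub>P\<^esub> n = \<one>\<^bsub>\<Gamma>\<^esub>} = I" by (auto simp: P_def GI)
    then have "\<one>\<^bsub>P\<^esub> \<in> H" unfolding H_def Hs_def
      using monoid.one_closed[OF group.is_monoid[OF grpP]] UI by simp
    then show "H \<noteq> {}" by blast
  next
    fix a assume a: "a \<in> H"
    then have ac: "a \<in> carrier P" unfolding H_def Hs_def by auto
    have "{n\<in>I. a n = \<one>\<^bsub>\<Gamma>\<^esub>} \<subseteq> {n\<in>I. (inv\<^bsub>P\<^esub> a) n = \<one>\<^bsub>\<Gamma>\<^esub>}"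
      using ac[unfolded P_def carrier_product_group] assms(1) monoid.inv_one[OF group.is_monoid[OF grpG]]
      by (auto simp: P_def GI)
    moreover have "{n\<in>I. a n = \<one>\<^bsub>\<Gamma>\<^esub>} \<in> U" using a unfolding H_def Hs_def by blast
    ultimately have "{n\<in>I. (inv\<^bsub>P\<^esub> a) n = \<one>\<^bsub>\<Gamma>\<^esub>} \<in> U" using Uup by blast
    then show "inv\<^bsub>P\<^esub> a \<in> H" using group.inv_closed[OF grpP ac] unfolding H_def Hs_def by blast
  next
    fix a b assume a: "a \<in> H" and b: "b \<in> H"
    then have ac: "a \<in> carrier P" and bc: "b \<in> carrier P" unfolding H_def Hs_def by auto
    have "{n\<in>I. a n = \<one>\<^bsub>\<Gamma>\<^esub>} \<inter> {n\<in>I. b n = \<one>\<^bsub>\<Gamma>\<^esub>} \<subseteq> {n\<in>I. (a \<otimes>\<^bsub>P\<^esub> b) n = \<one>\<^bsub>\<Gamma>\<^esub>}"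
      using monoid.l_one[OF group.is_monoid[OF grpG] monoid.one_closed[OF group.is_monoid[OF grpG]]]
      by (auto simp: P_def GI)
    moreover have "{n\<in>I. a n = \<one>\<^bsub>\<Gamma>\<^esub>} \<inter> {n\<in>I. b n = \<one>\<^bsub>\<Gamma>\<^esub>} \<in> U"
      using a b Uint unfolding H_def Hs_def by blast
    ultimately have "{n\<in>I. (a \<otimes>\<^bsub>P\<^esub> b) n = \<one>\<^bsub>\<Gamma>\<^esub>} \<in> U" using Uup by blast
    then show "a \<otimes>\<^bsub>P\<^esub> b \<in> H" using monoid.m_closed[OF group.is_monoid[OF grpP] ac bc]
      unfolding H_def Hs_def by blast
  qed
  have "\<not> haar_measurable G H"
  proof
    assume "haar_measurable G H"
    then have Hc: "H \<in> sets (completion (haar_prod G))" by (simp add: haar_measurable_def)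
    define M where "M = haar_prod G"
    define F where "F = (\<lambda>n. uniform_count_measure (carrier (G n)))"
    have MF: "M = PiM UNIV F" by (simp add: M_def F_def haar_prod_def)
    have spM: "space M = carrier P" unfolding M_def P_def using space_haar[where G=G, OF assms(1,2)] by simp
    interpret prob_space M unfolding M_def by (rule prob_haar[where G=G, OF assms(1,2)])
    have trm: "tr G c \<in> measurable M M" if "c \<in> carrier P" for c
      using tr_meas[where G=G, OF assms(1,2)] that spM unfolding M_def by simp
    have trd: "distr M M (tr G c) = M" if "c \<in> carrier P" for c
      using tr_distr[where G=G, OF assms(1,2)] that spM unfolding M_def by simp
    have trs: "tr G c x \<in> carrier P" if "c \<in> carrier P" "x \<in> carrier P" for c x
      using tr_space[where G=G, OF assms(1,2)] that spM unfolding M_def by simp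
    from Hc obtain S N N' where HS: "H = S \<union> N" "N \<subseteq> N'" "N' \<in> null_sets M" "S \<in> sets M"
      unfolding M_def by (rule sets_completionE)
    have AES: "AE x in M. (x \<in> S \<longleftrightarrow> x \<in> H)"
      by (rule AE_I'[OF HS(3)]) (use HS(1,2) in auto)
    have AEtr: "AE x in M. (tr G c x \<in> S \<longleftrightarrow> tr G c x \<in> H)" if c: "c \<in> carrier P" for c
    proof (rule AE_distrD[OF trm[OF c]])
      show "AE y in distr M M (tr G c). (y \<in> S \<longleftrightarrow> y \<in> H)" unfolding trd[OF c] by (rule AES)
    qed
    define cc where "cc \<gamma> J = (\<lambda>n. if n \<in> I \<and> n \<notin> J then \<gamma> else \<one>\<^bsub>G n\<^esub>)" for \<gamma> J
    have ccP: "cc \<gamma> J \<in> carrier P" if "\<gamma> \<in> carrier \<Gamma>" for \<gamma> J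
      using that monoid.one_closed[OF group.is_monoid[OF assms(1)]] by (auto simp: cc_def P_def GI)
    have key: "tr G (cc \<gamma> J) x \<in> Hs \<delta> \<longleftrightarrow> x \<in> Hs (inv\<^bsub>\<Gamma>\<^esub> \<gamma> \<otimes>\<^bsub>\<Gamma>\<^esub> \<delta>)"
      if x: "x \<in> carrier P" and g: "\<gamma> \<in> carrier \<Gamma>" and d: "\<delta> \<in> carrier \<Gamma>" and J: "finite J" for x \<gamma> \<delta> J
    proof -
      have xI: "x n \<in> carrier \<Gamma>" if "n \<in> I" for n using x that by (auto simp: P_def GI[symmetric])
      have "{n\<in>I. tr G (cc \<gamma> J) x n = \<delta>} - J = {n\<in>I. x n = inv\<^bsub>\<Gamma>\<^esub> \<gamma> \<otimes>\<^bsub>\<Gamma>\<^esub> \<delta>} - J"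
      proof (intro equalityI subsetI)
        fix n assume "n \<in> {n\<in>I. tr G (cc \<gamma> J) x n = \<delta>} - J"
        then have n: "n \<in> I" "n \<notin> J" "\<gamma> \<otimes>\<^bsub>\<Gamma>\<^esub> x n = \<delta>" by (auto simp: tr_def cc_def GI)
        then show "n \<in> {n\<in>I. x n = inv\<^bsub>\<Gamma>\<^esub> \<gamma> \<otimes>\<^bsub>\<Gamma>\<^esub> \<delta>} - J"
          using group.inv_solve_left[OF grpG xI[OF n(1)] g d] by auto
      next
        fix n assume "n \<in> {n\<in>I. x n = inv\<^bsub>\<Gamma>\<^esub> \<gamma> \<otimes>\<^bsub>\<Gamma>\<^esub> \<delta>} - J"
        then have n: "n \<in> I" "n \<notin> J" "x n = inv\<^bsub>\<Gamma>\<^esub> \<gamma> \<otimes>\<^bsub>\<Gamma>\<^esub> \<delta>" by auto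
        then have "\<gamma> \<otimes>\<^bsub>\<Gamma>\<^esub> x n = \<delta>"
          using group.inv_solve_left[OF grpG xI[OF n(1)] g d] by auto
        then show "n \<in> {n\<in>I. tr G (cc \<gamma> J) x n = \<delta>} - J" using n by (auto simp: tr_def cc_def GI)
      qed
      then have "{n\<in>I. tr G (cc \<gamma> J) x n = \<delta>} \<in> U \<longleftrightarrow> {n\<in>I. x n = inv\<^bsub>\<Gamma>\<^esub> \<gamma> \<otimes>\<^bsub>\<Gamma>\<^esub> \<delta>} \<in> U"
        using Uiff[OF J] by blast
      then show ?thesis using x trs[OF ccP[OF g] x] unfolding Hs_def by blast
    qed
    have keyH: "tr G (cc (inv\<^bsub>\<Gamma>\<^esub> \<delta>) J) x \<in> H \<longleftrightarrow> x \<in> Hs \<delta>"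
      if x: "x \<in> carrier P" and d: "\<delta> \<in> carrier \<Gamma>" and J: "finite J" for x \<delta> J
    proof -
      have "inv\<^bsub>\<Gamma>\<^esub> (inv\<^bsub>\<Gamma>\<^esub> \<delta>) \<otimes>\<^bsub>\<Gamma>\<^esub> \<one>\<^bsub>\<Gamma>\<^esub> = \<delta>"
        using d grpG by (simp add: group.inv_inv group.is_monoid monoid.r_one group.inv_closed)
      then show ?thesis unfolding H_def
        using key[OF x group.inv_closed[OF grpG d] monoid.one_closed[OF group.is_monoid[OF grpG]] J] by simp
    qed
    define R where "R \<delta> = tr G (cc (inv\<^bsub>\<Gamma>\<^esub> \<delta>) {}) -` S \<inter> space M" for \<delta>
    have RS: "R \<delta> \<in> sets M" if "\<delta> \<in> carrier \<Gamma>" for \<delta>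
      unfolding R_def using measurable_sets[OF trm[OF ccP[OF group.inv_closed[OF grpG that]]] HS(4)] .
    have RAE: "AE x in M. (x \<in> R \<delta> \<longleftrightarrow> x \<in> Hs \<delta>)" if d: "\<delta> \<in> carrier \<Gamma>" for \<delta>
      using AE_space AEtr[OF ccP[OF group.inv_closed[OF grpG d], of "{}"]]
    proof eventually_elim
      case (elim x)
      then show ?case using keyH[of x \<delta> "{}"] d spM unfolding R_def by auto
    qed
    have memC: "y \<in> prod_emb UNIV F J X \<longleftrightarrow> restrict y J \<in> X" if "y \<in> space M" for y J X
      using that by (simp add: prod_emb_def MF space_PiM)
    have cyl: "emeasure M (R \<delta> \<inter> C) = emeasure M (S \<inter> C)"
      if d: "\<delta> \<in> carrier \<Gamma>" and C: "C \<in> prod_algebra UNIV F" for \<delta> C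
    proof -
      obtain J E where CJ: "C = prod_emb UNIV F J (Pi\<^sub>E J E)" "finite J"
        using prod_algebraE[OF C] by metis
      define c where "c = cc (inv\<^bsub>\<Gamma>\<^esub> \<delta>) J"
      have cP: "c \<in> carrier P" unfolding c_def by (rule ccP[OF group.inv_closed[OF grpG d]])
      have CM: "C \<in> sets M" unfolding MF sets_PiM using C by (rule sigma_sets.Basic)
      have tC: "tr G c x \<in> C \<longleftrightarrow> x \<in> C" if x: "x \<in> space M" for x
      proof -
        have "tr G c x j = x j" if "j \<in> J" for j
          using that x spM monoid.l_one[OF group.is_monoid[OF assms(1)]] by (auto simp: tr_def c_def cc_def P_def PiE_iff)
        then have "restrict (tr G c x) J = restrict x J" by (auto simp: restrict_def)
        moreover have "tr G c x \<in> space M" using trs[OF cP] x spM by simp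
        ultimately show ?thesis using x unfolding CJ(1) by (simp add: memC)
      qed
      have "emeasure M (S \<inter> C) = emeasure (distr M M (tr G c)) (S \<inter> C)" by (simp add: trd[OF cP])
      also have "\<dots> = emeasure M (tr G c -` (S \<inter> C) \<inter> space M)"
        by (rule emeasure_distr[OF trm[OF cP]]) (use HS(4) CM in auto)
      also have "\<dots> = emeasure M (R \<delta> \<inter> C)"
      proof (rule emeasure_eq_AE)
        show "AE x in M. (x \<in> tr G c -` (S \<inter> C) \<inter> space M \<longleftrightarrow> x \<in> R \<delta> \<inter> C)"
          using AE_space AEtr[OF cP] RAE[OF d]
        proof eventually_elim
          case (elim x)
          then show ?case using keyH[of x \<delta> J, folded c_def] tC[of x] d spM CJ(2) by auto
        qed
        show "tr G c -` (S \<inter> C) \<inter> space M \<in> sets M"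
          by (rule measurable_sets[OF trm[OF cP]]) (use HS(4) CM in auto)
        show "R \<delta> \<inter> C \<in> sets M" using RS[OF d] CM by auto
      qed
      finally show ?thesis by simp
    qed
    have spE: "space M \<in> prod_algebra UNIV F"
      using space_in_prod_algebra[of UNIV F] by (simp add: MF space_PiM)
    have dens: "density M (indicator (R \<delta>0)) = density M (indicator S)"
    proof (rule measure_eqI_generator_eq[where E="prod_algebra UNIV F" and \<Omega>="space M" and A="\<lambda>_. space M"])
      show "Int_stable (prod_algebra UNIV F)" by (rule Int_stable_prod_algebra)
      show "prod_algebra UNIV F \<subseteq> Pow (space M)"
        using prod_algebra_sets_into_space[of UNIV F] by (simp add: MF space_PiM)
      show "emeasure (density M (indicator (R \<delta>0))) X = emeasure (density M (indicator S)) X"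
        if X: "X \<in> prod_algebra UNIV F" for X
      proof -
        have XM: "X \<in> sets M" unfolding MF sets_PiM using X by (rule sigma_sets.Basic)
        show ?thesis
          using dens_ind[OF RS[OF d0(1)] XM] dens_ind[OF HS(4) XM] cyl[OF d0(1) X] by simp
      qed
      show "sets (density M (indicator (R \<delta>0))) = sigma_sets (space M) (prod_algebra UNIV F)"
        by (simp add: MF sets_PiM space_PiM)
      show "sets (density M (indicator S)) = sigma_sets (space M) (prod_algebra UNIV F)"
        by (simp add: MF sets_PiM space_PiM)
      show "range (\<lambda>_. space M) \<subseteq> prod_algebra UNIV F" using spE by auto
      show "(\<Union>i::nat. space M) = space M" by simp
      show "emeasure (density M (indicator (R \<delta>0))) (space M) \<noteq> \<infinity>"
        using dens_ind[OF RS[OF d0(1)] sets.top] by simp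
    qed
    have RSe: "emeasure M (R \<delta>0 \<inter> S) = emeasure M S"
      using dens_ind[OF RS[OF d0(1)] HS(4)] dens_ind[OF HS(4) HS(4)] dens by simp
    have R0: "emeasure M (R \<delta>0 \<inter> S) = emeasure M {}"
    proof (rule emeasure_eq_AE)
      show "AE x in M. (x \<in> R \<delta>0 \<inter> S \<longleftrightarrow> x \<in> {})" using RAE[OF d0(1)] AES
      proof eventually_elim
        case (elim x)
        show ?case
        proof
          assume "x \<in> R \<delta>0 \<inter> S"
          then have "x \<in> Hs \<delta>0" "x \<in> Hs \<one>\<^bsub>\<Gamma>\<^esub>" using elim unfolding H_def by auto
          then have "{n\<in>I. x n = \<delta>0} \<in> U" "{n\<in>I. x n = \<one>\<^bsub>\<Gamma>\<^esub>} \<in> U" unfolding Hs_def by auto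
          moreover have "{n\<in>I. x n = \<delta>0} \<inter> {n\<in>I. x n = \<one>\<^bsub>\<Gamma>\<^esub>} = {}" using d0(2) by auto
          ultimately show "x \<in> {}" using Udisj by blast
        qed simp
      qed
    qed (use RS[OF d0(1)] HS(4) in auto)
    have S0: "emeasure M S = 0" using RSe R0 by simp
    have Rn: "emeasure M (R \<delta>) = 0" if d: "\<delta> \<in> carrier \<Gamma>" for \<delta>
    proof -
      have "R \<delta> \<inter> space M = R \<delta>" "S \<inter> space M = S" using RS[OF d] HS(4) sets.sets_into_space by auto
      then show ?thesis using cyl[OF d spE] S0 by simp
    qed
    have "emeasure M (space M) = emeasure M (\<Union>\<delta>\<in>carrier \<Gamma>. R \<delta>)"
    proof (rule emeasure_eq_AE)
      have "AE x in M. \<forall>\<delta>\<in>carrier \<Gamma>. (x \<in> R \<delta> \<longleftrightarrow> x \<in> Hs \<delta>)"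
        by (rule AE_finite_allI[OF finG]) (rule RAE)
      then show "AE x in M. (x \<in> space M \<longleftrightarrow> x \<in> (\<Union>\<delta>\<in>carrier \<Gamma>. R \<delta>))" using AE_space
      proof eventually_elim
        case (elim x)
        have xP: "x \<in> carrier P" using elim spM by simp
        have xI: "x n \<in> carrier \<Gamma>" if "n \<in> I" for n using xP that by (auto simp: P_def GI[symmetric])
        have "\<Union>((\<lambda>\<delta>. {n\<in>I. x n = \<delta>}) ` carrier \<Gamma>) = I" using xI by auto
        then obtain \<delta> where dd: "\<delta> \<in> carrier \<Gamma>" "{n\<in>I. x n = \<delta>} \<in> U"
          using Uunion[of "(\<lambda>\<delta>. {n\<in>I. x n = \<delta>}) ` carrier \<Gamma>"] finG UI by auto
        then have "x \<in> Hs \<delta>" using xP unfolding Hs_def by auto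
        then have "x \<in> R \<delta>" using elim dd(1) by auto
        moreover have "R \<delta> \<subseteq> space M" unfolding R_def by auto
        ultimately show ?case using dd(1) unfolding R_def by blast
      qed
      show "space M \<in> sets M" by simp
      show "(\<Union>\<delta>\<in>carrier \<Gamma>. R \<delta>) \<in> sets M" using RS finG by (intro sets.finite_UN) auto
    qed
    also have "\<dots> \<le> (\<Sum>\<delta>\<in>carrier \<Gamma>. emeasure M (R \<delta>))"
      by (rule emeasure_subadditive_finite[OF finG]) (use RS in auto)
    also have "\<dots> = 0" using Rn by simp
    finally show False using emeasure_space_1 by simp
  qed
  then show ?thesis using sub P_def by blast
qed

end
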